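(* For every graph $G$, $\rho_{\widehat{T}}(G)=\Theta(G)$.
   Context: Graphs are finite and simple. A graph $G=(V,E)$ is a threshold graph if there exist real weights $w:V\to\mathbb{R}$ and a real number $s$ such that for all distinct $i,j\in V$: $w(i)+w(j)\ge s$ if and only if $ij\in E$. The threshold dimension $\Theta(G)$ of $G=(V,E)$ is the least $k\ge 1$ such that there exist threshold graphs $(V,E_1),\dots,(V,E_k)$ with each $E_i\subseteq E$ and $E_1\cup\dots\cup E_k=E$. For $u,v\in(\mathbb{R}\cup\{-\infty\})^k$ the max-plus tropical dot product is $u\,\widehat{\odot}\,v=\max_i(u_i+v_i)$. A max-plus $k$-tropical dot product representation of $G$ is a map $f:V\to(\mathbb{R}\cup\{-\infty\})^k$ with a threshold $t>0$ such that for all distinct $x,y\in V$: $xy\in E$ iff $f(x)\,\widehat{\odot}\,f(y)\ge t$. $\rho_{\widehat T}(G)$ is the least $k\ge 1$ for which such a representation exists. *)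

theory Defs
  imports "HOL-Analysis.Analysis"
begin

definition simple_graph :: "'a set \<Rightarrow> 'a set set \<Rightarrow> bool" where
  "simple_graph V E \<longleftrightarrow> finite V \<and> (\<forall>e\<in>E. e \<subseteq> V \<and> card e = 2)"

definition threshold_graph :: "'a set \<Rightarrow> 'a set set \<Rightarrow> bool" where
  "threshold_graph V F \<longleftrightarrow>
     (\<exists>(w::'a \<Rightarrow> real) (s::real). \<forall>i\<in>V. \<forall>j\<in>V. i \<noteq> j \<longrightarrow>
        (w i + w j \<ge> s \<longleftrightarrow> {i, j} \<in> F))"

definition threshold_dim :: "'a set \<Rightarrow> 'a set set \<Rightarrow> nat" where
  "threshold_dim V E = (LEAST k. k \<ge> 1 \<and>
     (\<exists>Es :: nat \<Rightarrow> 'a set set.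
        (\<forall>i<k. Es i \<subseteq> E \<and> threshold_graph V (Es i)) \<and> (\<Union>i<k. Es i) = E))"

text \<open>Max-plus tropical dot product of vectors in (R \<union> {-\<infinity>})^k, vectors modelled as
  nat \<Rightarrow> ereal with coordinates 0..k-1 (never +\<infinity>).\<close>
definition trop_dot :: "nat \<Rightarrow> (nat \<Rightarrow> ereal) \<Rightarrow> (nat \<Rightarrow> ereal) \<Rightarrow> ereal" where
  "trop_dot k u v = Max ((\<lambda>i. u i + v i) ` {..<k})"

definition maxplus_trop_rep :: "'a set \<Rightarrow> 'a set set \<Rightarrow> nat \<Rightarrow> bool" where
  "maxplus_trop_rep V E k \<longleftrightarrow>
     (\<exists>(f :: 'a \<Rightarrow> nat \<Rightarrow> ereal) (t::real).
        t > 0 \<and> (\<forall>x\<in>V. \<forall>i<k. f x i \<noteq> \<infinity>) \<and>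
        (\<forall>x\<in>V. \<forall>y\<in>V. x \<noteq> y \<longrightarrow> ({x, y} \<in> E \<longleftrightarrow> trop_dot k (f x) (f y) \<ge> ereal t)))"

definition rho_trop :: "'a set \<Rightarrow> 'a set set \<Rightarrow> nat" where
  "rho_trop V E = (LEAST k. k \<ge> 1 \<and> maxplus_trop_rep V E k)"

end

theory Submission
  imports Defs
begin

lemma trop_ge:
  assumes "k \<ge> 1"
  shows "(c \<le> trop_dot k u v) \<longleftrightarrow> (\<exists>i<k. c \<le> u i + v i)"
proof -
  have "{..<k} \<noteq> {}" using assms by (auto simp: lessThan_empty_iff)
  then show ?thesis unfolding trop_dot_def
    by (subst Max_ge_iff) (use assms in \<open>auto simp: lessThan_empty_iff\<close>)
qed

lemma thr_to_trop:
  assumes k: "k \<ge> 1"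
    and cov: "\<forall>i<k. Es i \<subseteq> E \<and> threshold_graph V (Es i)" "(\<Union>i<k. Es i) = E"
  shows "maxplus_trop_rep V E k"
proof -
  have "\<forall>i\<in>{..<k}. \<exists>w s. \<forall>a\<in>V. \<forall>b\<in>V. a \<noteq> b \<longrightarrow> ((w::'a\<Rightarrow>real) a + w b \<ge> (s::real) \<longleftrightarrow> {a, b} \<in> Es i)"
    using cov(1) unfolding threshold_graph_def by auto
  then obtain W where "\<forall>i\<in>{..<k}. \<exists>s. \<forall>a\<in>V. \<forall>b\<in>V. a \<noteq> b \<longrightarrow> (W i a + W i b \<ge> (s::real) \<longleftrightarrow> {a, b} \<in> Es i)"
    by (rule bchoice[THEN exE]) blast
  then obtain S where WS: "\<forall>i\<in>{..<k}. \<forall>a\<in>V. \<forall>b\<in>V. a \<noteq> b \<longrightarrow> (W i a + W i b \<ge> S i \<longleftrightarrow> {a, b} \<in> Es i)"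
    by (rule bchoice[THEN exE]) blast
  define f where "f = (\<lambda>x i. ereal (W i x - S i / 2 + 1/2))"
  have "\<forall>x\<in>V. \<forall>y\<in>V. x \<noteq> y \<longrightarrow> ({x, y} \<in> E \<longleftrightarrow> trop_dot k (f x) (f y) \<ge> ereal 1)"
  proof (intro ballI impI)
    fix x y assume xy: "x \<in> V" "y \<in> V" "x \<noteq> y"
    have "trop_dot k (f x) (f y) \<ge> ereal 1 \<longleftrightarrow> (\<exists>i<k. ereal 1 \<le> f x i + f y i)"
      using trop_ge[OF k] by blast
    also have "\<dots> \<longleftrightarrow> (\<exists>i<k. W i x + W i y \<ge> S i)"
      unfolding f_def by (auto simp: algebra_simps)
    also have "\<dots> \<longleftrightarrow> (\<exists>i<k. {x, y} \<in> Es i)" using WS xy by auto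
    also have "\<dots> \<longleftrightarrow> {x, y} \<in> E" using cov(2) by auto
    finally show "{x, y} \<in> E \<longleftrightarrow> trop_dot k (f x) (f y) \<ge> ereal 1" by simp
  qed
  then show ?thesis unfolding maxplus_trop_rep_def
    by (intro exI[of _ f] exI[of _ 1]) (auto simp: f_def)
qed

lemma trop_to_thr:
  assumes G: "simple_graph V E" and k: "k \<ge> 1" and R: "maxplus_trop_rep V E k"
  shows "\<exists>Es :: nat \<Rightarrow> 'a set set.
        (\<forall>i<k. Es i \<subseteq> E \<and> threshold_graph V (Es i)) \<and> (\<Union>i<k. Es i) = E"
proof -
  obtain f t where ft: "t > 0 \<and> (\<forall>x\<in>V. \<forall>i<k. f x i \<noteq> \<infinity>) \<and>
     (\<forall>x\<in>V. \<forall>y\<in>V. x \<noteq> y \<longrightarrow> ({x, y} \<in> E \<longleftrightarrow> trop_dot k (f x) (f y) \<ge> ereal t))"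
    using R unfolding maxplus_trop_rep_def by (elim exE) (rule that)
  have t: "t > 0" and fin: "\<forall>x\<in>V. \<forall>i<k. f x i \<noteq> \<infinity>"
    and rep: "\<forall>x\<in>V. \<forall>y\<in>V. x \<noteq> y \<longrightarrow> ({x, y} \<in> E \<longleftrightarrow> trop_dot k (f x) (f y) \<ge> ereal t)"
    using ft by (rule conjunct1, rule conjunct2[THEN conjunct1], rule conjunct2[THEN conjunct2])
  have finV: "finite V" using G unfolding simple_graph_def by auto
  define Es where "Es = (\<lambda>i. {{x, y} | x y. x \<in> V \<and> y \<in> V \<and> x \<noteq> y \<and> f x i + f y i \<ge> ereal t})"
  have sub: "Es i \<subseteq> E" if "i < k" for i
  proof
    fix e assume "e \<in> Es i"
    then obtain x y where e: "e = {x, y}" "x \<in> V" "y \<in> V" "x \<noteq> y" "f x i + f y i \<ge> ereal t"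
      unfolding Es_def by auto
    have "trop_dot k (f x) (f y) \<ge> ereal t" using trop_ge[OF k] e(5) that by blast
    then show "e \<in> E" using rep e by auto
  qed
  have thr: "threshold_graph V (Es i)" if "i < k" for i
  proof -
    define C where "C = (\<Sum>x\<in>V. \<bar>real_of_ereal (f x i)\<bar>)"
    have Cb: "\<bar>real_of_ereal (f x i)\<bar> \<le> C" if "x \<in> V" for x
      unfolding C_def using finV that by (intro member_le_sum) (auto simp del: abs_real_of_ereal)
    define M where "M = - C - \<bar>t\<bar> - 1"
    define w where "w = (\<lambda>x. if f x i = - \<infinity> then M else real_of_ereal (f x i))"
    have C0: "C \<ge> 0" unfolding C_def by (intro sum_nonneg) (auto simp del: abs_real_of_ereal)
    have wC: "w x \<le> C" if "x \<in> V" for x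
      using Cb[OF that] abs_ge_self[of "real_of_ereal (f x i)"] C0
      unfolding w_def M_def by (auto simp del: abs_real_of_ereal)
    have key: "(w a + w b \<ge> t) \<longleftrightarrow> (f a i + f b i \<ge> ereal t)" if ab: "a \<in> V" "b \<in> V" for a b
    proof -
      have fa: "f a i \<noteq> \<infinity>" "f b i \<noteq> \<infinity>" using fin ab \<open>i<k\<close> by auto
      show ?thesis
      proof (cases "f a i = - \<infinity>")
        case True
        have "w b \<le> C" using wC ab by auto
        then have "w a + w b < t" using True by (auto simp: w_def M_def)
        then show ?thesis using True fa by (cases "f b i") auto
      next
        case Fa: False
        show ?thesis
        proof (cases "f b i = - \<infinity>")
          case True
          have "w a \<le> C" using wC ab by auto
          then have "w a + w b < t" using True by (auto simp: w_def M_def)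
          then show ?thesis using True fa by (cases "f a i") auto
        next
          case False
          then show ?thesis using fa Fa by (cases "f a i"; cases "f b i") (auto simp: w_def)
        qed
      qed
    qed
    show ?thesis unfolding threshold_graph_def
    proof (intro exI[of _ w] exI[of _ t] ballI impI)
      fix a b assume ab: "a \<in> V" "b \<in> V" "a \<noteq> b"
      have "{a, b} \<in> Es i \<longleftrightarrow> f a i + f b i \<ge> ereal t"
      proof
        assume "{a, b} \<in> Es i"
        then obtain x y where xy: "{a, b} = {x, y}" "f x i + f y i \<ge> ereal t"
          unfolding Es_def by auto
        then have "(x = a \<and> y = b) \<or> (x = b \<and> y = a)" using xy(1) by (auto simp: doubleton_eq_iff)
        then show "f a i + f b i \<ge> ereal t" using xy by (auto simp: add.commute)
      next
        assume "f a i + f b i \<ge> ereal t"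
        then show "{a, b} \<in> Es i" unfolding Es_def mem_Collect_eq
          by (intro exI[of _ a] exI[of _ b]) (use ab in simp)
      qed
      then show "(w a + w b \<ge> t) \<longleftrightarrow> {a, b} \<in> Es i" using key ab by auto
    qed
  qed
  have "(\<Union>i<k. Es i) = E"
  proof
    show "(\<Union>i<k. Es i) \<subseteq> E" using sub by auto
  next
    show "E \<subseteq> (\<Union>i<k. Es i)"
    proof
      fix e assume eE: "e \<in> E"
      then have "e \<subseteq> V" "card e = 2" using G unfolding simple_graph_def by auto
      then obtain x y where e: "e = {x, y}" "x \<noteq> y" "x \<in> V" "y \<in> V"
        by (metis card_2_iff insert_subset)
      then have "trop_dot k (f x) (f y) \<ge> ereal t" using rep eE by auto
      then obtain i where "i < k" "f x i + f y i \<ge> ereal t" using trop_ge[OF k] by blast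
      moreover have "e \<in> Es i" unfolding Es_def mem_Collect_eq
          by (intro exI[of _ x] exI[of _ y]) (use e \<open>f x i + f y i \<ge> ereal t\<close> in simp)
      ultimately show "e \<in> (\<Union>i<k. Es i)" by blast
    qed
  qed
  then show ?thesis by (intro exI[of _ Es]) (use sub thr in blast)
qed

theorem mainTheorem6:
  fixes V :: "'a set" and E :: "'a set set"
  assumes "simple_graph V E"
  shows "rho_trop V E = threshold_dim V E"
proof -
  have "\<And>k. (k \<ge> 1 \<and> maxplus_trop_rep V E k) \<longleftrightarrow> (k \<ge> 1 \<and>
     (\<exists>Es :: nat \<Rightarrow> 'a set set.
        (\<forall>i<k. Es i \<subseteq> E \<and> threshold_graph V (Es i)) \<and> (\<Union>i<k. Es i) = E))"
  proof (intro iffI)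
    fix k assume "k \<ge> 1 \<and> maxplus_trop_rep V E k"
    then show "k \<ge> 1 \<and> (\<exists>Es :: nat \<Rightarrow> 'a set set.
        (\<forall>i<k. Es i \<subseteq> E \<and> threshold_graph V (Es i)) \<and> (\<Union>i<k. Es i) = E)"
    proof -
      have k1: "k \<ge> 1" and r: "maxplus_trop_rep V E k" using \<open>k \<ge> 1 \<and> maxplus_trop_rep V E k\<close> by auto
      show ?thesis using k1 trop_to_thr[OF assms k1 r] by (rule conjI)
    qed
  next
    fix k assume "k \<ge> 1 \<and> (\<exists>Es :: nat \<Rightarrow> 'a set set.
        (\<forall>i<k. Es i \<subseteq> E \<and> threshold_graph V (Es i)) \<and> (\<Union>i<k. Es i) = E)"
    then obtain Es :: "nat \<Rightarrow> 'a set set" where k1: "k \<ge> 1" and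
      c1: "\<forall>i<k. Es i \<subseteq> E \<and> threshold_graph V (Es i)" and c2: "(\<Union>i<k. Es i) = E" by blast
    show "k \<ge> 1 \<and> maxplus_trop_rep V E k" using k1 thr_to_trop[OF k1 c1 c2] by (rule conjI)
  qed
  then show ?thesis unfolding rho_trop_def threshold_dim_def by simp
qed

end
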